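(* Let $(G,\mathcal{B}_1,\mathcal{B}_2)$ be a Rota-Baxter system of groups, and set $G_1=\mathcal{B}_1(G)$, $G_2=\mathcal{B}_2(G)$, $H_1=\mathcal{B}_1(\operatorname{Ker}(\mathcal{B}_2))$, $H_2=\mathcal{B}_2(\operatorname{Ker}(\mathcal{B}_1))$, where $\operatorname{Ker}(\mathcal{B}_i)=\{a\in G\mid\mathcal{B}_i(a)=1_G\}$. Then $H_1$ is a normal subgroup of the group $G_1$, $H_2$ is a normal subgroup of the group $G_2$, and the map $\Theta:G_1/H_1\to G_2/H_2$, $\Theta(\mathcal{B}_1(a)H_1)=\mathcal{B}_2(a)H_2$ for $a\in G$, is well defined and is a group anti-isomorphism (a bijection with $\Theta(xy)=\Theta(y)\Theta(x)$).
   Context: A Rota-Baxter system of groups is a triple $(G,\mathcal{B}_1,\mathcal{B}_2)$ where $G$ is a group with identity $1_G$ and $\mathcal{B}_1,\mathcal{B}_2:G\to G$ are maps such that for all $a,b\in G$: $\mathcal{B}_1(a)\mathcal{B}_1(b)=\mathcal{B}_1(\mathcal{B}_1(a)b\mathcal{B}_2(a))$ and $\mathcal{B}_2(b)\mathcal{B}_2(a)=\mathcal{B}_2(\mathcal{B}_1(a)b\mathcal{B}_2(a))$. *)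

theory Defs
  imports "HOL-Algebra.Algebra"
begin

definition rota_baxter_system :: "('a, 'b) monoid_scheme \<Rightarrow> ('a \<Rightarrow> 'a) \<Rightarrow> ('a \<Rightarrow> 'a) \<Rightarrow> bool" where
  "rota_baxter_system G B1 B2 \<longleftrightarrow> group G \<and>
     B1 \<in> carrier G \<rightarrow> carrier G \<and> B2 \<in> carrier G \<rightarrow> carrier G \<and>
     (\<forall>a \<in> carrier G. \<forall>b \<in> carrier G.
        B1 a \<otimes>\<^bsub>G\<^esub> B1 b = B1 (B1 a \<otimes>\<^bsub>G\<^esub> b \<otimes>\<^bsub>G\<^esub> B2 a) \<and>
        B2 b \<otimes>\<^bsub>G\<^esub> B2 a = B2 (B1 a \<otimes>\<^bsub>G\<^esub> b \<otimes>\<^bsub>G\<^esub> B2 a))"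

definition rb_ker :: "('a, 'b) monoid_scheme \<Rightarrow> ('a \<Rightarrow> 'a) \<Rightarrow> 'a set" where
  "rb_ker G B = {a \<in> carrier G. B a = \<one>\<^bsub>G\<^esub>}"

end

theory Submission
  imports Defs
begin

lemma r_coset_upd[simp]: "H #>\<^bsub>(M\<lparr>carrier := S\<rparr>)\<^esub> a = H #>\<^bsub>M\<^esub> a"
  by (simp add: r_coset_def)
lemma l_coset_upd[simp]: "a <#\<^bsub>(M\<lparr>carrier := S\<rparr>)\<^esub> H = a <#\<^bsub>M\<^esub> H"
  by (simp add: l_coset_def)
lemma set_mult_upd[simp]: "H <#>\<^bsub>(M\<lparr>carrier := S\<rparr>)\<^esub> K = H <#>\<^bsub>M\<^esub> K"
  by (simp add: set_mult_def)

locale rbsys = group G for G (structure) +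
  fixes B1 B2 :: "'a \<Rightarrow> 'a"
  assumes B1c: "a \<in> carrier G \<Longrightarrow> B1 a \<in> carrier G"
    and B2c: "a \<in> carrier G \<Longrightarrow> B2 a \<in> carrier G"
    and id1: "a \<in> carrier G \<Longrightarrow> b \<in> carrier G \<Longrightarrow> B1 a \<otimes> B1 b = B1 (B1 a \<otimes> b \<otimes> B2 a)"
    and id2: "a \<in> carrier G \<Longrightarrow> b \<in> carrier G \<Longrightarrow> B2 b \<otimes> B2 a = B2 (B1 a \<otimes> b \<otimes> B2 a)"
begin

lemma P: assumes "a \<in> carrier G" "b \<in> carrier G"
  obtains c where "c \<in> carrier G" "B1 c = B1 a \<otimes> B1 b" "B2 c = B2 b \<otimes> B2 a"
  using that[of "B1 a \<otimes> b \<otimes> B2 a"] assms id1 id2 B1c B2c by auto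

lemma solve: assumes "a \<in> carrier G" "c \<in> carrier G"
  shows "B1 a \<otimes> (inv (B1 a) \<otimes> c \<otimes> inv (B2 a)) \<otimes> B2 a = c"
proof -
  have x: "B1 a \<in> carrier G" "B2 a \<in> carrier G" using assms B1c B2c by auto
  have "c \<otimes> inv (B2 a) \<otimes> B2 a = c" using x assms by (simp add: m_assoc)
  thus ?thesis using x assms by (simp add: m_assoc[symmetric])
qed

lemma E: obtains e where "e \<in> carrier G" "B1 e = \<one>" "B2 e = \<one>"
proof -
  define b where "b = inv (B1 \<one>) \<otimes> \<one> \<otimes> inv (B2 \<one>)"
  have b: "b \<in> carrier G" using B1c B2c by (simp add: b_def)
  have s: "B1 \<one> \<otimes> b \<otimes> B2 \<one> = \<one>" using solve[of \<one> \<one>] by (simp add: b_def)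
  have "B1 \<one> \<otimes> B1 b = B1 \<one>" using id1[of \<one> b] b s by simp
  hence 1: "B1 b = \<one>" using b B1c one_closed l_cancel_one by blast
  have "B2 b \<otimes> B2 \<one> = B2 \<one>" using id2[of \<one> b] b s by simp
  hence 2: "B2 b = \<one>" using b B2c one_closed r_cancel_one by blast
  show ?thesis using that b 1 2 by blast
qed

lemma I: assumes "a \<in> carrier G"
  obtains b where "b \<in> carrier G" "B1 b = inv (B1 a)" "B2 b = inv (B2 a)"
proof -
  obtain e where e: "e \<in> carrier G" "B1 e = \<one>" "B2 e = \<one>" using E by blast
  define b where "b = inv (B1 a) \<otimes> e \<otimes> inv (B2 a)"
  have b: "b \<in> carrier G" using B1c B2c assms e by (simp add: b_def)
  have s: "B1 a \<otimes> b \<otimes> B2 a = e" using solve[of a e] assms e by (simp add: b_def)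
  have "B1 a \<otimes> B1 b = \<one>" using id1[of a b] b s e assms by simp
  hence "inv (B1 b) = B1 a" using b B1c assms by (simp add: inv_equality)
  hence 1: "B1 b = inv (B1 a)" using b B1c by (metis inv_inv)
  have "B2 b \<otimes> B2 a = \<one>" using id2[of a b] b s e assms by simp
  hence 2: "B2 b = inv (B2 a)" using b B2c assms by (metis inv_equality)
  show ?thesis using that b 1 2 by blast
qed

lemma imgI: "c \<in> carrier G \<Longrightarrow> B c = \<one> \<Longrightarrow> y = f c \<Longrightarrow> y \<in> f ` rb_ker G B"
  by (auto simp: rb_ker_def)

lemma sub1: "subgroup (B1 ` carrier G) G"
proof (rule subgroupI)
  show "B1 ` carrier G \<subseteq> carrier G" using B1c by auto
  show "B1 ` carrier G \<noteq> {}" by auto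
  fix x assume "x \<in> B1 ` carrier G"
  then obtain a where a: "a \<in> carrier G" "x = B1 a" by auto
  then obtain b where "b \<in> carrier G" "B1 b = inv (B1 a)" "B2 b = inv (B2 a)" using I[of a] by blast
  thus "inv x \<in> B1 ` carrier G" using a by (metis image_eqI)
next
  fix x y assume "x \<in> B1 ` carrier G" "y \<in> B1 ` carrier G"
  then obtain a b where a: "a \<in> carrier G" "x = B1 a" "b \<in> carrier G" "y = B1 b" by auto
  then obtain c where "c \<in> carrier G" "B1 c = B1 a \<otimes> B1 b" using P[of a b] by blast
  thus "x \<otimes> y \<in> B1 ` carrier G" using a by (metis image_eqI)
qed

lemma sub2: "subgroup (B2 ` carrier G) G"
proof (rule subgroupI)
  show "B2 ` carrier G \<subseteq> carrier G" using B2c by auto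
  show "B2 ` carrier G \<noteq> {}" by auto
  fix x assume "x \<in> B2 ` carrier G"
  then obtain a where a: "a \<in> carrier G" "x = B2 a" by auto
  then obtain b where "b \<in> carrier G" "B1 b = inv (B1 a)" "B2 b = inv (B2 a)" using I[of a] by blast
  thus "inv x \<in> B2 ` carrier G" using a by (metis image_eqI)
next
  fix x y assume "x \<in> B2 ` carrier G" "y \<in> B2 ` carrier G"
  then obtain a b where a: "a \<in> carrier G" "x = B2 a" "b \<in> carrier G" "y = B2 b" by auto
  then obtain c where "c \<in> carrier G" "B2 c = B2 a \<otimes> B2 b" using P[of b a] by blast
  thus "x \<otimes> y \<in> B2 ` carrier G" using a by (metis image_eqI)
qed

lemma subH1: "subgroup (B1 ` rb_ker G B2) G"
proof (rule subgroupI)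
  show "B1 ` rb_ker G B2 \<subseteq> carrier G" using B1c by (auto simp: rb_ker_def)
  obtain e where "e \<in> carrier G" "B1 e = \<one>" "B2 e = \<one>" using E by blast
  thus "B1 ` rb_ker G B2 \<noteq> {}" by (auto simp: rb_ker_def)
  fix x assume "x \<in> B1 ` rb_ker G B2"
  then obtain a where a: "a \<in> carrier G" "B2 a = \<one>" "x = B1 a" by (auto simp: rb_ker_def)
  then obtain b where b: "b \<in> carrier G" "B1 b = inv (B1 a)" "B2 b = inv (B2 a)" using I[of a] by blast
  have "B2 b = \<one>" using a b by simp
  moreover have "inv x = B1 b" using a b by simp
  ultimately show "inv x \<in> B1 ` rb_ker G B2" by (rule imgI[OF b(1)])
next
  fix x y assume "x \<in> B1 ` rb_ker G B2" "y \<in> B1 ` rb_ker G B2"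
  then obtain a b where a: "a \<in> carrier G" "x = B1 a" "b \<in> carrier G" "y = B1 b" "B2 a = \<one>" "B2 b = \<one>"
    by (auto simp: rb_ker_def)
  then obtain c where c: "c \<in> carrier G" "B1 c = B1 a \<otimes> B1 b" "B2 c = B2 b \<otimes> B2 a" using P[of a b] by blast
  have "B2 c = \<one>" using a c by simp
  moreover have "x \<otimes> y = B1 c" using a c by simp
  ultimately show "x \<otimes> y \<in> B1 ` rb_ker G B2" by (rule imgI[OF c(1)])
qed

lemma subH2: "subgroup (B2 ` rb_ker G B1) G"
proof (rule subgroupI)
  show "B2 ` rb_ker G B1 \<subseteq> carrier G" using B2c by (auto simp: rb_ker_def)
  obtain e where "e \<in> carrier G" "B1 e = \<one>" "B2 e = \<one>" using E by blast
  thus "B2 ` rb_ker G B1 \<noteq> {}" by (auto simp: rb_ker_def)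
  fix x assume "x \<in> B2 ` rb_ker G B1"
  then obtain a where a: "a \<in> carrier G" "B1 a = \<one>" "x = B2 a" by (auto simp: rb_ker_def)
  then obtain b where b: "b \<in> carrier G" "B1 b = inv (B1 a)" "B2 b = inv (B2 a)" using I[of a] by blast
  have "B1 b = \<one>" using a b by simp
  moreover have "inv x = B2 b" using a b by simp
  ultimately show "inv x \<in> B2 ` rb_ker G B1" by (rule imgI[OF b(1)])
next
  fix x y assume "x \<in> B2 ` rb_ker G B1" "y \<in> B2 ` rb_ker G B1"
  then obtain a b where a: "a \<in> carrier G" "x = B2 a" "b \<in> carrier G" "y = B2 b" "B1 a = \<one>" "B1 b = \<one>"
    by (auto simp: rb_ker_def)
  then obtain c where c: "c \<in> carrier G" "B1 c = B1 b \<otimes> B1 a" "B2 c = B2 a \<otimes> B2 b" using P[of b a] by blast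
  have "B1 c = \<one>" using a c by simp
  moreover have "x \<otimes> y = B2 c" using a c by simp
  ultimately show "x \<otimes> y \<in> B2 ` rb_ker G B1" by (rule imgI[OF c(1)])
qed

lemma conjH1: assumes "x \<in> B1 ` carrier G" "h \<in> B1 ` rb_ker G B2"
  shows "x \<otimes> h \<otimes> inv x \<in> B1 ` rb_ker G B2"
proof -
  obtain a k where a: "a \<in> carrier G" "x = B1 a" "k \<in> carrier G" "B2 k = \<one>" "h = B1 k"
    using assms by (auto simp: rb_ker_def)
  obtain b where b: "b \<in> carrier G" "B1 b = inv (B1 a)" "B2 b = inv (B2 a)" using I[of a] a by blast
  obtain d where d: "d \<in> carrier G" "B1 d = B1 a \<otimes> B1 k" "B2 d = B2 k \<otimes> B2 a" using P[of a k] a by blast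
  obtain c where c: "c \<in> carrier G" "B1 c = B1 d \<otimes> B1 b" "B2 c = B2 b \<otimes> B2 d" using P[of d b] b d by blast
  have "B2 c = \<one>" using c d b a B2c by simp
  moreover have "x \<otimes> h \<otimes> inv x = B1 c" using c d b a by simp
  ultimately show ?thesis by (rule imgI[OF c(1)])
qed

lemma conjH2: assumes "x \<in> B2 ` carrier G" "h \<in> B2 ` rb_ker G B1"
  shows "x \<otimes> h \<otimes> inv x \<in> B2 ` rb_ker G B1"
proof -
  obtain a m where a: "a \<in> carrier G" "x = B2 a" "m \<in> carrier G" "B1 m = \<one>" "h = B2 m"
    using assms by (auto simp: rb_ker_def)
  obtain b where b: "b \<in> carrier G" "B1 b = inv (B1 a)" "B2 b = inv (B2 a)" using I[of a] a by blast
  obtain d where d: "d \<in> carrier G" "B1 d = B1 b \<otimes> B1 m" "B2 d = B2 m \<otimes> B2 b" using P[of b m] a b by blast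
  obtain c where c: "c \<in> carrier G" "B1 c = B1 d \<otimes> B1 a" "B2 c = B2 a \<otimes> B2 d" using P[of d a] a d by blast
  have "B1 c = \<one>" using c d b a B1c by simp
  moreover have "x \<otimes> h \<otimes> inv x = B2 c" using c d b a B2c by (simp add: m_assoc)
  ultimately show ?thesis by (rule imgI[OF c(1)])
qed

lemma K: assumes "c \<in> carrier G"
  shows "B1 c \<in> B1 ` rb_ker G B2 \<longleftrightarrow> B2 c \<in> B2 ` rb_ker G B1"
proof
  assume "B1 c \<in> B1 ` rb_ker G B2"
  then obtain k where k: "k \<in> carrier G" "B2 k = \<one>" "B1 c = B1 k" by (auto simp: rb_ker_def)
  obtain b where b: "b \<in> carrier G" "B1 b = inv (B1 k)" "B2 b = inv (B2 k)" using I[of k] k by blast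
  obtain m where m: "m \<in> carrier G" "B1 m = B1 b \<otimes> B1 c" "B2 m = B2 c \<otimes> B2 b" using P[of b c] b assms by blast
  have "B1 m = \<one>" using m b k B1c by simp
  moreover have "B2 c = B2 m" using m b k B2c assms by simp
  ultimately show "B2 c \<in> B2 ` rb_ker G B1" by (rule imgI[OF m(1)])
next
  assume "B2 c \<in> B2 ` rb_ker G B1"
  then obtain k where k: "k \<in> carrier G" "B1 k = \<one>" "B2 c = B2 k" by (auto simp: rb_ker_def)
  obtain b where b: "b \<in> carrier G" "B1 b = inv (B1 k)" "B2 b = inv (B2 k)" using I[of k] k by blast
  obtain m where m: "m \<in> carrier G" "B1 m = B1 c \<otimes> B1 b" "B2 m = B2 b \<otimes> B2 c" using P[of c b] b assms by blast
  have "B2 m = \<one>" using m b k B2c by simp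
  moreover have "B1 c = B1 m" using m b k B1c assms by simp
  ultimately show "B1 c \<in> B1 ` rb_ker G B2" by (rule imgI[OF m(1)])
qed

lemma normH1: "B1 ` rb_ker G B2 \<lhd> G\<lparr>carrier := B1 ` carrier G\<rparr>"
proof -
  interpret G1: group "G\<lparr>carrier := B1 ` carrier G\<rparr>" by (rule subgroup_imp_group[OF sub1])
  have ss: "B1 ` rb_ker G B2 \<subseteq> B1 ` carrier G" by (auto simp: rb_ker_def)
  show ?thesis unfolding G1.normal_inv_iff
  proof (intro conjI ballI)
    show "subgroup (B1 ` rb_ker G B2) (G\<lparr>carrier := B1 ` carrier G\<rparr>)"
      by (rule subgroup_incl[OF subH1 sub1 ss])
    fix x h assume "x \<in> carrier (G\<lparr>carrier := B1 ` carrier G\<rparr>)" "h \<in> B1 ` rb_ker G B2"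
    thus "x \<otimes>\<^bsub>G\<lparr>carrier := B1 ` carrier G\<rparr>\<^esub> h \<otimes>\<^bsub>G\<lparr>carrier := B1 ` carrier G\<rparr>\<^esub>
          inv\<^bsub>G\<lparr>carrier := B1 ` carrier G\<rparr>\<^esub> x \<in> B1 ` rb_ker G B2"
      using conjH1 m_inv_consistent[OF sub1] by simp
  qed
qed

lemma normH2: "B2 ` rb_ker G B1 \<lhd> G\<lparr>carrier := B2 ` carrier G\<rparr>"
proof -
  interpret G2: group "G\<lparr>carrier := B2 ` carrier G\<rparr>" by (rule subgroup_imp_group[OF sub2])
  have ss: "B2 ` rb_ker G B1 \<subseteq> B2 ` carrier G" by (auto simp: rb_ker_def)
  show ?thesis unfolding G2.normal_inv_iff
  proof (intro conjI ballI)
    show "subgroup (B2 ` rb_ker G B1) (G\<lparr>carrier := B2 ` carrier G\<rparr>)"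
      by (rule subgroup_incl[OF subH2 sub2 ss])
    fix x h assume "x \<in> carrier (G\<lparr>carrier := B2 ` carrier G\<rparr>)" "h \<in> B2 ` rb_ker G B1"
    thus "x \<otimes>\<^bsub>G\<lparr>carrier := B2 ` carrier G\<rparr>\<^esub> h \<otimes>\<^bsub>G\<lparr>carrier := B2 ` carrier G\<rparr>\<^esub>
          inv\<^bsub>G\<lparr>carrier := B2 ` carrier G\<rparr>\<^esub> x \<in> B2 ` rb_ker G B1"
      using conjH2 m_inv_consistent[OF sub2] by simp
  qed
qed

lemma ceq1: "a \<in> carrier G \<Longrightarrow> B1 ` rb_ker G B2 #> B1 a = B1 a <# B1 ` rb_ker G B2"
  using normal.coset_eq[OF normH1] by simp

lemma ceq2: "a \<in> carrier G \<Longrightarrow> B2 ` rb_ker G B1 #> B2 a = B2 a <# B2 ` rb_ker G B1"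
  using normal.coset_eq[OF normH2] by simp

lemma rcos_eq: assumes "subgroup H G" "x \<in> carrier G" "y \<in> carrier G"
  shows "H #> x = H #> y \<longleftrightarrow> x \<otimes> inv y \<in> H"
proof
  assume "H #> x = H #> y"
  moreover have "x \<in> H #> x" using assms by (simp add: rcos_self)
  ultimately show "x \<otimes> inv y \<in> H" using subgroup.rcos_module_imp[OF assms(1) is_group assms(3)] by simp
next
  assume "x \<otimes> inv y \<in> H"
  hence "x \<in> H #> y" using subgroup.rcos_module_rev[OF assms(1) is_group assms(3) assms(2)] by simp
  thus "H #> x = H #> y" using repr_independence[OF _ assms(3,1)] by simp
qed

lemma lcos_eq: assumes "subgroup H G" "x \<in> carrier G" "y \<in> carrier G"
  shows "x <# H = y <# H \<longleftrightarrow> inv y \<otimes> x \<in> H"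
proof
  assume "x <# H = y <# H"
  moreover have "x \<in> x <# H" using assms subgroup.one_closed[OF assms(1)]
    by (force simp: l_coset_def)
  ultimately obtain h where "h \<in> H" "x = y \<otimes> h" by (auto simp: l_coset_def)
  thus "inv y \<otimes> x \<in> H" using assms subgroup.mem_carrier[OF assms(1)]
    by (simp add: m_assoc[symmetric])
next
  assume "inv y \<otimes> x \<in> H"
  hence "x \<in> y <# H" using subgroup.lcos_module_rev[OF assms(1) is_group assms(3) assms(2)] by simp
  thus "x <# H = y <# H" using l_repr_independence[OF _ assms(3,1)] by simp
qed

lemma crit: assumes "a \<in> carrier G" "b \<in> carrier G"
  shows "B1 a <# B1 ` rb_ker G B2 = B1 b <# B1 ` rb_ker G B2 \<longleftrightarrow>
         B2 a <# B2 ` rb_ker G B1 = B2 b <# B2 ` rb_ker G B1"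
proof -
  obtain b' where b': "b' \<in> carrier G" "B1 b' = inv (B1 b)" "B2 b' = inv (B2 b)" using I[of b] assms by blast
  obtain c where c: "c \<in> carrier G" "B1 c = B1 b' \<otimes> B1 a" "B2 c = B2 a \<otimes> B2 b'" using P[of b' a] b' assms by blast
  have "B1 a <# B1 ` rb_ker G B2 = B1 b <# B1 ` rb_ker G B2 \<longleftrightarrow> B1 c \<in> B1 ` rb_ker G B2"
    using lcos_eq[OF subH1] assms B1c c b' by simp
  also have "\<dots> \<longleftrightarrow> B2 c \<in> B2 ` rb_ker G B1" using K[OF c(1)] .
  also have "\<dots> \<longleftrightarrow> B2 ` rb_ker G B1 #> B2 a = B2 ` rb_ker G B1 #> B2 b"
    using rcos_eq[OF subH2] assms B2c c b' by simp
  also have "\<dots> \<longleftrightarrow> B2 a <# B2 ` rb_ker G B1 = B2 b <# B2 ` rb_ker G B1"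
    using ceq2 assms by simp
  finally show ?thesis .
qed

end

theorem proposition5p4:
  fixes G :: "('a, 'b) monoid_scheme" and B1 B2 :: "'a \<Rightarrow> 'a"
  assumes rbs: "rota_baxter_system G B1 B2"
  defines "G1 \<equiv> B1 ` carrier G" and "G2 \<equiv> B2 ` carrier G"
      and "H1 \<equiv> B1 ` rb_ker G B2" and "H2 \<equiv> B2 ` rb_ker G B1"
  shows "subgroup G1 G \<and> subgroup G2 G
       \<and> H1 \<lhd> (G\<lparr>carrier := G1\<rparr>) \<and> H2 \<lhd> (G\<lparr>carrier := G2\<rparr>)
       \<and> (\<exists>f. (\<forall>a \<in> carrier G. f (B1 a <#\<^bsub>G\<^esub> H1) = B2 a <#\<^bsub>G\<^esub> H2)
              \<and> bij_betw f (carrier ((G\<lparr>carrier := G1\<rparr>) Mod H1)) (carrier ((G\<lparr>carrier := G2\<rparr>) Mod H2))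
              \<and> (\<forall>P \<in> carrier ((G\<lparr>carrier := G1\<rparr>) Mod H1). \<forall>Q \<in> carrier ((G\<lparr>carrier := G1\<rparr>) Mod H1).
                   f (P \<otimes>\<^bsub>((G\<lparr>carrier := G1\<rparr>) Mod H1)\<^esub> Q)
                     = f Q \<otimes>\<^bsub>((G\<lparr>carrier := G2\<rparr>) Mod H2)\<^esub> f P))"
proof -
  have grp: "group G" using rbs by (simp add: rota_baxter_system_def)
  interpret R: rbsys G B1 B2
  proof (rule rbsys.intro[OF grp], rule rbsys_axioms.intro)
    fix a b assume a: "a \<in> carrier G" and b: "b \<in> carrier G"
    show "B1 a \<in> carrier G" "B2 a \<in> carrier G" using rbs a by (auto simp: rota_baxter_system_def)
    show "B1 a \<otimes>\<^bsub>G\<^esub> B1 b = B1 (B1 a \<otimes>\<^bsub>G\<^esub> b \<otimes>\<^bsub>G\<^esub> B2 a)"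
      "B2 b \<otimes>\<^bsub>G\<^esub> B2 a = B2 (B1 a \<otimes>\<^bsub>G\<^esub> b \<otimes>\<^bsub>G\<^esub> B2 a)"
      using rbs a b by (auto simp: rota_baxter_system_def)
  qed
  have s1: "subgroup G1 G" unfolding G1_def by (rule R.sub1)
  have s2: "subgroup G2 G" unfolding G2_def by (rule R.sub2)
  have n1: "H1 \<lhd> G\<lparr>carrier := G1\<rparr>" unfolding G1_def H1_def by (rule R.normH1)
  have n2: "H2 \<lhd> G\<lparr>carrier := G2\<rparr>" unfolding G2_def H2_def by (rule R.normH2)
  have crit: "\<And>a b. a \<in> carrier G \<Longrightarrow> b \<in> carrier G \<Longrightarrow>
      (B1 a <#\<^bsub>G\<^esub> H1 = B1 b <#\<^bsub>G\<^esub> H1) = (B2 a <#\<^bsub>G\<^esub> H2 = B2 b <#\<^bsub>G\<^esub> H2)"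
    unfolding H1_def H2_def by (rule R.crit)
  have ceq1: "\<And>a. a \<in> carrier G \<Longrightarrow> H1 #>\<^bsub>G\<^esub> B1 a = B1 a <#\<^bsub>G\<^esub> H1"
    unfolding H1_def by (rule R.ceq1)
  have ceq2: "\<And>a. a \<in> carrier G \<Longrightarrow> H2 #>\<^bsub>G\<^esub> B2 a = B2 a <#\<^bsub>G\<^esub> H2"
    unfolding H2_def by (rule R.ceq2)
  have car1: "carrier ((G\<lparr>carrier := G1\<rparr>) Mod H1) = (\<lambda>a. B1 a <#\<^bsub>G\<^esub> H1) ` carrier G"
    using ceq1 by (auto simp: FactGroup_def RCOSETS_def G1_def)
  have car2: "carrier ((G\<lparr>carrier := G2\<rparr>) Mod H2) = (\<lambda>a. B2 a <#\<^bsub>G\<^esub> H2) ` carrier G"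
    using ceq2 by (auto simp: FactGroup_def RCOSETS_def G2_def)
  define f where "f P = B2 (SOME a. a \<in> carrier G \<and> P = B1 a <#\<^bsub>G\<^esub> H1) <#\<^bsub>G\<^esub> H2" for P
  have fa: "f (B1 a <#\<^bsub>G\<^esub> H1) = B2 a <#\<^bsub>G\<^esub> H2" if a: "a \<in> carrier G" for a
  proof -
    let ?a = "SOME a'. a' \<in> carrier G \<and> B1 a <#\<^bsub>G\<^esub> H1 = B1 a' <#\<^bsub>G\<^esub> H1"
    have "?a \<in> carrier G \<and> B1 a <#\<^bsub>G\<^esub> H1 = B1 ?a <#\<^bsub>G\<^esub> H1"
      by (rule someI_ex) (use a in blast)
    hence "?a \<in> carrier G" "B2 a <#\<^bsub>G\<^esub> H2 = B2 ?a <#\<^bsub>G\<^esub> H2" using crit a by auto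
    thus ?thesis by (simp add: f_def)
  qed
  have bij: "bij_betw f (carrier ((G\<lparr>carrier := G1\<rparr>) Mod H1)) (carrier ((G\<lparr>carrier := G2\<rparr>) Mod H2))"
    unfolding bij_betw_def car1 car2
  proof
    show "inj_on f ((\<lambda>a. B1 a <#\<^bsub>G\<^esub> H1) ` carrier G)"
    proof (rule inj_onI)
      fix P Q assume "P \<in> (\<lambda>a. B1 a <#\<^bsub>G\<^esub> H1) ` carrier G" "Q \<in> (\<lambda>a. B1 a <#\<^bsub>G\<^esub> H1) ` carrier G"
        and e: "f P = f Q"
      then obtain a b where ab: "a \<in> carrier G" "b \<in> carrier G" "P = B1 a <#\<^bsub>G\<^esub> H1" "Q = B1 b <#\<^bsub>G\<^esub> H1"
        by auto
      thus "P = Q" using e fa crit by simp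
    qed
    show "f ` (\<lambda>a. B1 a <#\<^bsub>G\<^esub> H1) ` carrier G = (\<lambda>a. B2 a <#\<^bsub>G\<^esub> H2) ` carrier G"
      unfolding image_image using fa by (rule image_cong[OF refl])
  qed
  have hom: "f (P \<otimes>\<^bsub>((G\<lparr>carrier := G1\<rparr>) Mod H1)\<^esub> Q) = f Q \<otimes>\<^bsub>((G\<lparr>carrier := G2\<rparr>) Mod H2)\<^esub> f P"
    if P: "P \<in> carrier ((G\<lparr>carrier := G1\<rparr>) Mod H1)" and Q: "Q \<in> carrier ((G\<lparr>carrier := G1\<rparr>) Mod H1)" for P Q
  proof -
    obtain a b where ab: "a \<in> carrier G" "b \<in> carrier G" "P = B1 a <#\<^bsub>G\<^esub> H1" "Q = B1 b <#\<^bsub>G\<^esub> H1"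
      using P Q car1 by auto
    obtain c where c: "c \<in> carrier G" "B1 c = B1 a \<otimes>\<^bsub>G\<^esub> B1 b" "B2 c = B2 b \<otimes>\<^bsub>G\<^esub> B2 a"
      using R.P[of a b] ab by blast
    have B1G: "B1 a \<in> G1" "B1 b \<in> G1" using ab by (auto simp: G1_def)
    have B2G: "B2 a \<in> G2" "B2 b \<in> G2" using ab by (auto simp: G2_def)
    have "P \<otimes>\<^bsub>((G\<lparr>carrier := G1\<rparr>) Mod H1)\<^esub> Q = (H1 #>\<^bsub>G\<^esub> B1 a) <#>\<^bsub>G\<^esub> (H1 #>\<^bsub>G\<^esub> B1 b)"
      using ab ceq1 by simp
    also have "\<dots> = H1 #>\<^bsub>G\<^esub> (B1 a \<otimes>\<^bsub>G\<^esub> B1 b)"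
      using normal.rcos_sum[OF n1, of "B1 a" "B1 b"] B1G by simp
    also have "\<dots> = B1 c <#\<^bsub>G\<^esub> H1" using ceq1[OF c(1)] c(2) by simp
    finally have "f (P \<otimes>\<^bsub>((G\<lparr>carrier := G1\<rparr>) Mod H1)\<^esub> Q) = B2 c <#\<^bsub>G\<^esub> H2" using fa[OF c(1)] by simp
    also have "\<dots> = H2 #>\<^bsub>G\<^esub> (B2 b \<otimes>\<^bsub>G\<^esub> B2 a)" using ceq2[OF c(1)] c(3) by simp
    also have "\<dots> = (H2 #>\<^bsub>G\<^esub> B2 b) <#>\<^bsub>G\<^esub> (H2 #>\<^bsub>G\<^esub> B2 a)"
      using normal.rcos_sum[OF n2, of "B2 b" "B2 a"] B2G by simp
    also have "\<dots> = f Q \<otimes>\<^bsub>((G\<lparr>carrier := G2\<rparr>) Mod H2)\<^esub> f P"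
      using ab fa ceq2 by simp
    finally show ?thesis .
  qed
  show ?thesis using s1 s2 n1 n2 fa bij hom by blast
qed

end
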